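(* Let $H$ be a connected graph containing a triangle, let $u$ be a vertex of $H$, and let $M$ be a unicyclic graph with unique cycle $C$. Let $r\ge |V(H)|+3$ and let $U$ be the set of vertices of $M$ at distance exactly $r$ from $C$. Then there is a homomorphism from $M$ to $H$ that maps every vertex of $U$ to $u$.
   Context: Graphs are simple and loopless. A homomorphism from $M$ to $H$ is a map $h:V(M)\to V(H)$ sending every edge to an edge. A graph is unicyclic if it contains exactly one cycle. The distance from a vertex to a set of vertices is the minimum length of a path from the vertex to a vertex of the set. *)

theory Defs
  imports Main
begin

definition graph :: "'a set \<Rightarrow> 'a set set \<Rightarrow> bool" where
  "graph V E \<longleftrightarrow> finite V \<and> (\<forall>e\<in>E. \<exists>x y. e = {x, y} \<and> x \<noteq> y \<and> x \<in> V \<and> y \<in> V)"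

definition walk :: "'a set \<Rightarrow> 'a set set \<Rightarrow> 'a list \<Rightarrow> bool" where
  "walk V E xs \<longleftrightarrow> xs \<noteq> [] \<and> set xs \<subseteq> V \<and>
     (\<forall>i. Suc i < length xs \<longrightarrow> {xs ! i, xs ! Suc i} \<in> E)"

definition path :: "'a set \<Rightarrow> 'a set set \<Rightarrow> 'a list \<Rightarrow> bool" where
  "path V E xs \<longleftrightarrow> walk V E xs \<and> distinct xs"

definition connected_graph :: "'a set \<Rightarrow> 'a set set \<Rightarrow> bool" where
  "connected_graph V E \<longleftrightarrow> V \<noteq> {} \<and>
     (\<forall>x\<in>V. \<forall>y\<in>V. \<exists>xs. path V E xs \<and> hd xs = x \<and> last xs = y)"

definition has_triangle :: "'a set \<Rightarrow> 'a set set \<Rightarrow> bool" where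
  "has_triangle V E \<longleftrightarrow> (\<exists>a\<in>V. \<exists>b\<in>V. \<exists>c\<in>V. a \<noteq> b \<and> b \<noteq> c \<and> a \<noteq> c \<and>
     {a, b} \<in> E \<and> {b, c} \<in> E \<and> {a, c} \<in> E)"

definition cycle_list :: "'a set \<Rightarrow> 'a set set \<Rightarrow> 'a list \<Rightarrow> bool" where
  "cycle_list V E xs \<longleftrightarrow> path V E xs \<and> length xs \<ge> 3 \<and> {last xs, hd xs} \<in> E"

definition cycle_edges :: "'a list \<Rightarrow> 'a set set" where
  "cycle_edges xs = {{xs ! i, xs ! ((Suc i) mod length xs)} | i. i < length xs}"

definition cycles :: "'a set \<Rightarrow> 'a set set \<Rightarrow> ('a set \<times> 'a set set) set" where
  "cycles V E = {(set xs, cycle_edges xs) | xs. cycle_list V E xs}"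

definition unicyclic_with :: "'a set \<Rightarrow> 'a set set \<Rightarrow> ('a set \<times> 'a set set) \<Rightarrow> bool" where
  "unicyclic_with V E C \<longleftrightarrow> cycles V E = {C}"

definition dist_to :: "'a set \<Rightarrow> 'a set set \<Rightarrow> 'a \<Rightarrow> 'a set \<Rightarrow> nat \<Rightarrow> bool" where
  "dist_to V E v S n \<longleftrightarrow>
     (\<exists>xs. path V E xs \<and> hd xs = v \<and> last xs \<in> S \<and> length xs = Suc n) \<and>
     (\<forall>m<n. \<not> (\<exists>xs. path V E xs \<and> hd xs = v \<and> last xs \<in> S \<and> length xs = Suc m))"

definition graph_hom :: "'a set \<Rightarrow> 'a set set \<Rightarrow> 'b set \<Rightarrow> 'b set set \<Rightarrow> ('a \<Rightarrow> 'b) \<Rightarrow> bool" where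
  "graph_hom VM EM VH EH h \<longleftrightarrow> (\<forall>x\<in>VM. h x \<in> VH) \<and>
     (\<forall>x y. {x, y} \<in> EM \<longrightarrow> {h x, h y} \<in> EH)"

end

theory Submission
  imports Defs
begin


fun wk :: "'a set set \<Rightarrow> 'a list \<Rightarrow> bool" where
  "wk E [] = False"
| "wk E [x] = True"
| "wk E (x # y # xs) = ({x, y} \<in> E \<and> wk E (y # xs))"

fun ed :: "'a list \<Rightarrow> 'a set set" where
  "ed [] = {}"
| "ed [x] = {}"
| "ed (x # y # xs) = insert {x, y} (ed (y # xs))"

lemma wk_nonempty: "wk E w \<Longrightarrow> w \<noteq> []" by (cases w) auto

lemma wk_Cons: "xs \<noteq> [] \<Longrightarrow> wk E (x # xs) \<longleftrightarrow> {x, hd xs} \<in> E \<and> wk E xs"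
  by (cases xs) auto

lemma ed_Cons: "xs \<noteq> [] \<Longrightarrow> ed (x # xs) = insert {x, hd xs} (ed xs)"
  by (cases xs) auto

lemma wk_idx: "wk E w \<longleftrightarrow> w \<noteq> [] \<and> (\<forall>i. Suc i < length w \<longrightarrow> {w!i, w!Suc i} \<in> E)"
proof (induction E w rule: wk.induct)
  case (3 E x y xs)
  show ?case
  proof
    assume a: "wk E (x # y # xs)"
    have "{(x # y # xs) ! i, (x # y # xs) ! Suc i} \<in> E" if "Suc i < length (x # y # xs)" for i
    proof (cases i)
      case 0 then show ?thesis using a by simp
    next
      case (Suc j) then show ?thesis using a 3 that by auto
    qed
    then show "x # y # xs \<noteq> [] \<and> (\<forall>i. Suc i < length (x # y # xs) \<longrightarrow> {(x # y # xs) ! i, (x # y # xs) ! Suc i} \<in> E)"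
      by blast
  next
    assume a: "x # y # xs \<noteq> [] \<and> (\<forall>i. Suc i < length (x # y # xs) \<longrightarrow> {(x # y # xs) ! i, (x # y # xs) ! Suc i} \<in> E)"
    have "{x,y} \<in> E" using a by force
    moreover have "\<forall>j. Suc j < length (y # xs) \<longrightarrow> {(y # xs) ! j, (y # xs) ! Suc j} \<in> E"
    proof (intro allI impI)
      fix j assume "Suc j < length (y # xs)"
      then have "Suc (Suc j) < length (x # y # xs)" by simp
      then show "{(y # xs) ! j, (y # xs) ! Suc j} \<in> E" using a by fastforce
    qed
    ultimately show "wk E (x # y # xs)" using 3 by simp
  qed
qed auto

lemma ed_idx: "e \<in> ed w \<longleftrightarrow> (\<exists>i. Suc i < length w \<and> e = {w!i, w!Suc i})"
proof (induction w rule: ed.induct)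
  case (3 x y xs)
  show ?case
  proof
    assume "e \<in> ed (x # y # xs)"
    then have "e = {x,y} \<or> e \<in> ed (y # xs)" by simp
    then show "\<exists>i. Suc i < length (x # y # xs) \<and> e = {(x # y # xs) ! i, (x # y # xs) ! Suc i}"
    proof
      assume "e = {x,y}" then show ?thesis by (intro exI[of _ 0]) simp
    next
      assume "e \<in> ed (y # xs)"
      then obtain j where "Suc j < length (y # xs)" "e = {(y # xs) ! j, (y # xs) ! Suc j}" using 3 by blast
      then show ?thesis by (intro exI[of _ "Suc j"]) simp
    qed
  next
    assume "\<exists>i. Suc i < length (x # y # xs) \<and> e = {(x # y # xs) ! i, (x # y # xs) ! Suc i}"
    then obtain i where i: "Suc i < length (x # y # xs)" "e = {(x # y # xs) ! i, (x # y # xs) ! Suc i}" by blast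
    show "e \<in> ed (x # y # xs)"
    proof (cases i)
      case 0 then show ?thesis using i by simp
    next
      case (Suc j) then show ?thesis using i 3 by auto
    qed
  qed
qed auto

lemma ed_sub: "e \<in> ed w \<Longrightarrow> e \<subseteq> set w"
  by (induction w rule: ed.induct) auto

lemma wk_append: "xs \<noteq> [] \<Longrightarrow> ys \<noteq> [] \<Longrightarrow>
   wk E (xs @ ys) \<longleftrightarrow> wk E xs \<and> wk E ys \<and> {last xs, hd ys} \<in> E"
proof (induction xs)
  case (Cons x xs)
  show ?case
  proof (cases "xs = []")
    case True then show ?thesis using Cons by (auto simp add: wk_Cons)
  next
    case False then show ?thesis using Cons by (simp add: wk_Cons)
  qed
qed simp

lemma ed_append: "xs \<noteq> [] \<Longrightarrow> ys \<noteq> [] \<Longrightarrow>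
   ed (xs @ ys) = ed xs \<union> ed ys \<union> {{last xs, hd ys}}"
proof (induction xs)
  case (Cons x xs)
  show ?case
  proof (cases "xs = []")
    case True then show ?thesis using Cons by (auto simp add: ed_Cons)
  next
    case False then show ?thesis using Cons by (auto simp add: ed_Cons)
  qed
qed simp

lemma wk_suffix: "wk E (a @ b) \<Longrightarrow> b \<noteq> [] \<Longrightarrow> wk E b"
  by (cases "a = []") (auto simp: wk_append)

lemma wk_prefix: "wk E (a @ b) \<Longrightarrow> a \<noteq> [] \<Longrightarrow> wk E a"
  by (cases "b = []") (auto simp: wk_append)

lemma ed_suffix: "ed b \<subseteq> ed (a @ b)"
  by (cases "a = []"; cases "b = []") (auto simp: ed_append)

lemma ed_prefix: "ed a \<subseteq> ed (a @ b)"
  by (cases "a = []"; cases "b = []") (auto simp: ed_append)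

lemma wk_join: "wk E A \<Longrightarrow> wk E B \<Longrightarrow> last A = hd B \<Longrightarrow>
   wk E (A @ tl B) \<and> ed (A @ tl B) = ed A \<union> ed B \<and> hd (A @ tl B) = hd A \<and> last (A @ tl B) = last B"
proof -
  assume a: "wk E A" "wk E B" "last A = hd B"
  have A: "A \<noteq> []" "B \<noteq> []" using a wk_nonempty by auto
  show ?thesis
  proof (cases "tl B = []")
    case True
    then have "B = [hd B]" using A by (cases B) auto
    then have "ed B = {}" by (metis ed.simps(2))
    then show ?thesis using a A True \<open>B = [hd B]\<close> by (metis append.right_neutral last_ConsL sup_bot.right_neutral)
  next
    case False
    have B: "B = hd B # tl B" using A by simp
    then have "wk E (tl B)" "{hd B, hd (tl B)} \<in> E" using a False wk_Cons by metis+
    moreover have "ed B = insert {hd B, hd (tl B)} (ed (tl B))" using B False ed_Cons by metis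
    moreover have "last B = last (tl B)" using B False by (metis last_ConsR)
    ultimately show ?thesis using a A False by (auto simp: wk_append ed_append)
  qed
qed

lemma wk_rev: "wk E (rev w) \<longleftrightarrow> wk E w"
proof (induction w)
  case (Cons x xs)
  show ?case
  proof (cases "xs = []")
    case False
    then show ?thesis using Cons by (auto simp add: wk_append wk_Cons last_rev insert_commute)
  qed simp
qed simp

lemma ed_rev: "ed (rev w) = ed w"
proof (induction w)
  case (Cons x xs)
  show ?case
  proof (cases "xs = []")
    case False
    then show ?thesis using Cons by (auto simp add: ed_append ed_Cons last_rev insert_commute)
  qed simp
qed simp

lemma graph_edge: "graph V E \<Longrightarrow> {x, y} \<in> E \<Longrightarrow> x \<in> V \<and> y \<in> V \<and> x \<noteq> y"
  unfolding graph_def by (metis doubleton_eq_iff)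

lemma wk_set: "graph V E \<Longrightarrow> wk E w \<Longrightarrow> hd w \<in> V \<Longrightarrow> set w \<subseteq> V"
  by (induction E w rule: wk.induct) (auto dest: graph_edge)

lemma shortcut: "wk E w \<Longrightarrow> \<exists>p. wk E p \<and> distinct p \<and> hd p = hd w \<and> last p = last w \<and>
    set p \<subseteq> set w \<and> ed p \<subseteq> ed w \<and> length p \<le> length w"
proof (induction w)
  case Nil then show ?case by simp
next
  case (Cons x w')
  show ?case
  proof (cases "w' = []")
    case True then show ?thesis by (intro exI[of _ "[x]"]) simp
  next
    case False
    then have wk': "wk E w'" and ex: "{x, hd w'} \<in> E" using Cons.prems wk_Cons by metis+
    from Cons.IH[OF wk'] obtain p' where p': "wk E p'" "distinct p'" "hd p' = hd w'" "last p' = last w'"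
      "set p' \<subseteq> set w'" "ed p' \<subseteq> ed w'" "length p' \<le> length w'" by blast
    have edw: "ed (x # w') = insert {x, hd w'} (ed w')" using False ed_Cons by metis
    show ?thesis
    proof (cases "x \<in> set p'")
      case True
      then obtain a b where ab: "p' = a @ x # b" by (metis split_list)
      have "wk E (x # b)" using wk_suffix p'(1) ab by blast
      moreover have "distinct (x # b)" using p'(2) ab by simp
      moreover have "last (x # b) = last (x # w')" using ab p'(4) False by simp
      moreover have "set (x # b) \<subseteq> set (x # w')" using ab p'(5) by auto
      moreover have "ed (x # b) \<subseteq> ed (x # w')" using ed_suffix[of "x # b" a] ab p'(6) edw by auto
      moreover have "length (x # b) \<le> length (x # w')" using ab p'(7) by simp
      ultimately show ?thesis by (intro exI[of _ "x # b"]) simp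
    next
      case nT: False
      have pne: "p' \<noteq> []" using p'(1) wk_nonempty by blast
      have "wk E (x # p')" using wk_Cons[OF pne] p' ex by simp
      moreover have "ed (x # p') \<subseteq> ed (x # w')" using ed_Cons[OF pne] p' edw by auto
      ultimately show ?thesis using nT p' pne False by (intro exI[of _ "x # p'"]) auto
    qed
  qed
qed

lemma path_iff: "path V E p \<longleftrightarrow> wk E p \<and> distinct p \<and> set p \<subseteq> V"
  unfolding path_def walk_def using wk_idx by blast




lemma cyc_last: "p \<noteq> [] \<Longrightarrow> {last p, hd p} \<in> cycle_edges p"
proof -
  assume p: "p \<noteq> []"
  let ?i = "length p - 1"
  have "?i < length p" using p by simp
  moreover have "Suc ?i mod length p = 0" using p by simp
  moreover have "p ! ?i = last p" using p by (simp add: last_conv_nth)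
  moreover have "p ! 0 = hd p" using p by (simp add: hd_conv_nth)
  moreover have "{p ! ?i, p ! (Suc ?i mod length p)} \<in> cycle_edges p"
    unfolding cycle_edges_def using \<open>?i < length p\<close> by blast
  ultimately show ?thesis by (simp only:)
qed

lemma cyc_edge_mem: "e \<in> cycle_edges cs \<Longrightarrow> e \<subseteq> set cs"
proof -
  assume "e \<in> cycle_edges cs"
  then obtain i where i: "i < length cs" "e = {cs ! i, cs ! (Suc i mod length cs)}"
    unfolding cycle_edges_def by blast
  have "0 < length cs" using i(1) by arith
  then have "Suc i mod length cs < length cs" by simp
  then have "cs ! (Suc i mod length cs) \<in> set cs" by (rule nth_mem)
  moreover have "cs ! i \<in> set cs" using i(1) by (rule nth_mem)
  ultimately show ?thesis using i(2) by simp
qed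

lemma ed_cyc: "ed cs \<subseteq> cycle_edges cs"
proof
  fix e assume "e \<in> ed cs"
  then obtain i where i: "Suc i < length cs" "e = {cs!i, cs!Suc i}" using ed_idx[of e cs] by blast
  then have "Suc i mod length cs = Suc i" by simp
  then have "e = {cs ! i, cs ! (Suc i mod length cs)}" using i(2) by simp
  moreover have "i < length cs" using i(1) by simp
  ultimately show "e \<in> cycle_edges cs" unfolding cycle_edges_def by blast
qed

lemma bridge:
  assumes g: "graph V E" and u: "cycles V E = {C}" and w: "wk E w" "hd w = x" "last w = y"
    and e: "{x,y} \<in> E" and x: "x \<in> V" and h: "{x,y} \<in> ed w \<longrightarrow> {x,y} \<in> snd C"
  shows "{x,y} \<in> snd C"
proof (cases "{x,y} \<in> ed w")
  case True then show ?thesis using h by blast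
next
  case False
  obtain p where p: "wk E p" "distinct p" "hd p = x" "last p = y" "ed p \<subseteq> ed w"
    using shortcut[OF w(1)] w by blast
  have xy: "x \<noteq> y" using graph_edge[OF g e] by blast
  have pne: "p \<noteq> []" using p wk_nonempty by blast
  have "length p \<ge> 3"
  proof (rule ccontr)
    assume "\<not> 3 \<le> length p"
    moreover have "length p \<noteq> 0" using pne by simp
    ultimately have "length p = 1 \<or> length p = 2" by linarith
    then show False
    proof
      assume "length p = 1" then have "p = [x]" using p(3) by (cases p) auto
      then show False using p(4) xy by simp
    next
      assume "length p = 2" then obtain a b where "p = [a,b]"
        by (auto simp: length_Suc_conv numeral_2_eq_2)
      then have "p = [x,y]" using p by simp
      then show False using p(5) False by simp
    qed
  qed
  moreover have "path V E p" using path_iff wk_set[OF g p(1)] p x by auto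
  moreover have "{last p, hd p} \<in> E" using p e by (simp add: insert_commute)
  ultimately have "cycle_list V E p" unfolding cycle_list_def by simp
  then have "(set p, cycle_edges p) \<in> cycles V E" unfolding cycles_def by blast
  then have "C = (set p, cycle_edges p)" using u by (metis singletonD)
  moreover have "{y,x} \<in> cycle_edges p" using cyc_last[OF pne] p by simp
  moreover have "{y,x} = {x,y}" by (rule insert_commute)
  ultimately show ?thesis by simp
qed

lemma arc_dir: "wk E cs \<Longrightarrow> cs = l1 @ a # l2 \<Longrightarrow> b \<in> set (a # l2) \<Longrightarrow>
   \<exists>w. wk E w \<and> hd w = a \<and> last w = b \<and> ed w \<subseteq> ed cs"
proof -
  assume a: "wk E cs" "cs = l1 @ a # l2" "b \<in> set (a # l2)"
  have w2: "wk E (a # l2)" using wk_suffix[of E l1 "a # l2"] a by simp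
  have e2: "ed (a # l2) \<subseteq> ed cs" using a ed_suffix[of "a # l2" l1] by simp
  obtain m1 m2 where m: "a # l2 = m1 @ b # m2" using a(3) by (metis split_list)
  have "wk E ((m1 @ [b]) @ m2)" using w2 m by simp
  then have "wk E (m1 @ [b])" using wk_prefix by blast
  moreover have "ed (m1 @ [b]) \<subseteq> ed cs" using ed_prefix[of "m1 @ [b]" m2] m e2 by auto
  moreover have "hd (m1 @ [b]) = a" using m by (cases m1) auto
  ultimately show ?thesis by (intro exI[of _ "m1 @ [b]"]) simp
qed

lemma arc: "wk E cs \<Longrightarrow> a \<in> set cs \<Longrightarrow> b \<in> set cs \<Longrightarrow>
   \<exists>w. wk E w \<and> hd w = a \<and> last w = b \<and> ed w \<subseteq> ed cs"
proof -
  assume a: "wk E cs" "a \<in> set cs" "b \<in> set cs"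
  obtain l1 l2 where l: "cs = l1 @ a # l2" using a(2) by (metis split_list)
  show ?thesis
  proof (cases "b \<in> set (a # l2)")
    case True then show ?thesis using arc_dir[OF a(1) l True] by blast
  next
    case False
    then have "b \<in> set l1" using a(3) l by auto
    then obtain n1 n2 where n: "l1 = n1 @ b # n2" by (metis split_list)
    then have "cs = n1 @ b # (n2 @ a # l2)" using l by simp
    then obtain w where w: "wk E w" "hd w = b" "last w = a" "ed w \<subseteq> ed cs"
      using arc_dir[of E cs n1 b "n2 @ a # l2" a] a by auto
    have "w \<noteq> []" using w wk_nonempty by blast
    then show ?thesis using w
      by (intro exI[of _ "rev w"]) (simp add: hd_rev last_rev wk_rev ed_rev)
  qed
qed




definition R :: "'a set set \<Rightarrow> 'a set \<Rightarrow> 'a \<Rightarrow> nat \<Rightarrow> bool" where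
  "R E S v n \<longleftrightarrow> (\<exists>w. wk E w \<and> hd w = v \<and> last w \<in> S \<and> length w = Suc n)"

definition lv :: "'a set set \<Rightarrow> 'a set \<Rightarrow> 'a \<Rightarrow> nat" where
  "lv E S v = (LEAST n. R E S v n)"

lemma lv_ex: "R E S v n \<Longrightarrow> R E S v (lv E S v) \<and> lv E S v \<le> n"
  unfolding lv_def by (metis LeastI Least_le)

lemma R_step: "{v,z} \<in> E \<Longrightarrow> R E S z n \<Longrightarrow> R E S v (Suc n)"
proof -
  assume e: "{v,z} \<in> E" and "R E S z n"
  then obtain w where w: "wk E w" "hd w = z" "last w \<in> S" "length w = Suc n" unfolding R_def by blast
  have wne: "w \<noteq> []" using w wk_nonempty by blast
  have "wk E (v # w)" using wk_Cons[OF wne] w e by simp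
  then show ?thesis unfolding R_def using w wne by (intro exI[of _ "v # w"]) simp
qed

lemma lv_step: "{v,z} \<in> E \<Longrightarrow> R E S z n \<Longrightarrow> lv E S v \<le> Suc (lv E S z)"
  by (meson R_step lv_ex)

lemma lv_zero: "R E S v n \<Longrightarrow> lv E S v = 0 \<longleftrightarrow> v \<in> S"
proof
  assume "R E S v n" "lv E S v = 0"
  then obtain w where "wk E w" "hd w = v" "last w \<in> S" "length w = Suc 0"
    using lv_ex unfolding R_def by metis
  then show "v \<in> S" by (cases w) auto
next
  assume "v \<in> S"
  then have "R E S v 0" unfolding R_def by (intro exI[of _ "[v]"]) simp
  then show "lv E S v = 0" using lv_ex[of E S v 0] by simp
qed

lemma shortest_elem:
  assumes w: "wk E w" "hd w = v" "last w \<in> S" "length w = Suc (lv E S v)" and i: "i < length w"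
  shows "R E S (w ! i) (lv E S v - i) \<and> lv E S (w ! i) \<le> lv E S v - i"
proof -
  have "w = take i w @ drop i w" by simp
  moreover have "drop i w \<noteq> []" using i by simp
  ultimately have "wk E (drop i w)" using w(1) wk_suffix by metis
  moreover have "hd (drop i w) = w ! i" using i by (simp add: hd_drop_conv_nth)
  moreover have "last (drop i w) = last w" using i by simp
  moreover have "length (drop i w) = Suc (lv E S v - i)" using i w(4) by simp
  ultimately have RR: "R E S (w ! i) (lv E S v - i)" unfolding R_def using w(3) by metis
  show ?thesis using RR lv_ex[OF RR] by simp
qed

lemma shortest_set:
  assumes w: "wk E w" "hd w = v" "last w \<in> S" "length w = Suc (lv E S v)"
  shows "z \<in> set w \<Longrightarrow> lv E S z \<le> lv E S v" and "z \<in> set (tl w) \<Longrightarrow> lv E S z < lv E S v"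
proof -
  assume "z \<in> set w"
  then obtain i where "i < length w" "z = w ! i" by (metis in_set_conv_nth)
  then show "lv E S z \<le> lv E S v" using shortest_elem[OF w] by fastforce
next
  assume "z \<in> set (tl w)"
  then obtain j where j: "j < length (tl w)" "z = tl w ! j" by (metis in_set_conv_nth)
  have wne: "w \<noteq> []" using w(4) by auto
  have "z = w ! Suc j" using j wne by (cases w) auto
  moreover have "Suc j < length w" using j by simp
  ultimately have "lv E S z \<le> lv E S v - Suc j" using shortest_elem[OF w] by blast
  moreover have "Suc j \<le> lv E S v" using \<open>Suc j < length w\<close> w(4) by simp
  ultimately show "lv E S z < lv E S v" by simp
qed

lemma shortest_get:
  assumes "R E S v n"
  obtains w where "wk E w" "hd w = v" "last w \<in> S" "length w = Suc (lv E S v)"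
  using lv_ex[OF assms] unfolding R_def by blast

lemma parent_ex:
  assumes "R E S v n" "lv E S v = Suc k"
  shows "\<exists>z. {v,z} \<in> E \<and> R E S z k \<and> lv E S z = k"
proof -
  obtain w where w: "wk E w" "hd w = v" "last w \<in> S" "length w = Suc (lv E S v)"
    using shortest_get[OF assms(1)] by blast
  then obtain z rest where wz: "w = v # z # rest" using assms(2) by (auto simp: length_Suc_conv)
  have e: "{v,z} \<in> E" using w(1) wz by simp
  have wk2: "wk E (z # rest)" using w(1) wz by simp
  have Rz: "R E S z k" unfolding R_def using wk2 w wz assms(2)
    by (intro exI[of _ "z # rest"]) auto
  have "lv E S z \<le> k" using lv_ex[OF Rz] by simp
  moreover have "lv E S v \<le> Suc (lv E S z)" using lv_step[OF e Rz] .
  ultimately show ?thesis using assms(2) e Rz by (intro exI[of _ z]) simp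
qed

lemma notin_ed: "hd A = x \<Longrightarrow> x \<notin> set (tl A) \<Longrightarrow> (tl A = [] \<or> hd (tl A) \<noteq> y) \<Longrightarrow> {x,y} \<notin> ed A"
proof (cases A)
  case (Cons a rest)
  assume h: "hd A = x" "x \<notin> set (tl A)" "tl A = [] \<or> hd (tl A) \<noteq> y"
  show ?thesis
  proof (cases "rest = []")
    case True then show ?thesis using Cons by simp
  next
    case False
    have ax: "a = x" using h Cons by simp
    have "ed A = insert {x, hd rest} (ed rest)" using ed_Cons[OF False, of a] Cons ax by simp
    moreover have "{x,y} \<notin> ed rest"
    proof
      assume "{x,y} \<in> ed rest"
      then have "x \<in> set rest" using ed_sub by blast
      then show False using h Cons by simp
    qed
    moreover have "{x,y} \<noteq> {x, hd rest}"
    proof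
      assume "{x,y} = {x, hd rest}"
      then have "y = hd rest" by (metis doubleton_eq_iff)
      then show False using h(3) Cons False by simp
    qed
    ultimately show ?thesis by simp
  qed
qed simp

lemma key:
  assumes g: "graph V E" and u: "cycles V E = {C}" and e: "{x,y} \<in> E" and x: "x \<in> V"
    and A: "wk E A" "hd A = x" "last A \<in> S" and B: "wk E B" "hd B = y" "last B \<in> S"
    and arcs: "\<And>a b. a \<in> S \<Longrightarrow> b \<in> S \<Longrightarrow> \<exists>w. wk E w \<and> hd w = a \<and> last w = b \<and> ed w \<subseteq> snd C"
    and nA: "{x,y} \<notin> ed A" and nB: "{x,y} \<notin> ed B"
  shows "{x,y} \<in> snd C"
proof -
  obtain c where c: "wk E c" "hd c = last A" "last c = last B" "ed c \<subseteq> snd C"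
    using arcs A(3) B(3) by blast
  have Bne: "B \<noteq> []" using B wk_nonempty by blast
  have rB1: "wk E (rev B)" by (simp add: wk_rev B(1))
  have rB2: "hd (rev B) = last B" by (simp add: hd_rev)
  have rB3: "last (rev B) = y" using Bne B(2) by (simp add: last_rev)
  have rB4: "ed (rev B) = ed B" by (rule ed_rev)
  note rB = rB1 rB2 rB3 rB4
  have j1: "wk E (c @ tl (rev B)) \<and> ed (c @ tl (rev B)) = ed c \<union> ed (rev B) \<and> hd (c @ tl (rev B)) = hd c
     \<and> last (c @ tl (rev B)) = last (rev B)"
    using wk_join[OF c(1) rB(1)] c rB by simp
  have j2: "wk E (A @ tl (c @ tl (rev B))) \<and> ed (A @ tl (c @ tl (rev B))) = ed A \<union> ed (c @ tl (rev B))
     \<and> hd (A @ tl (c @ tl (rev B))) = hd A \<and> last (A @ tl (c @ tl (rev B))) = last (c @ tl (rev B))"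
    using wk_join[of E A "c @ tl (rev B)"] A j1 c by simp
  let ?W = "A @ tl (c @ tl (rev B))"
  have W: "wk E ?W" "hd ?W = x" "last ?W = y" using j1 j2 A rB c by simp_all
  have "ed ?W = ed A \<union> ed c \<union> ed B" using j1 j2 rB by (simp add: Un_assoc)
  then have "{x,y} \<in> ed ?W \<longrightarrow> {x,y} \<in> snd C" using nA nB c(4) by blast
  then show ?thesis using bridge[OF g u W e x] by blast
qed




lemma R_pad: "R E S z L \<Longrightarrow> {z,y} \<in> E \<Longrightarrow> R E S z (L + 2 * k)"
proof (induction k)
  case (Suc k)
  have ih: "R E S z (L + 2 * k)" using Suc.IH Suc.prems by blast
  have "{y,z} \<in> E" using Suc.prems(2) by (simp add: insert_commute)
  then have "R E S y (Suc (L + 2 * k))" using R_step[OF _ ih] by blast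
  then have "R E S z (Suc (Suc (L + 2 * k)))" using R_step[OF Suc.prems(2)] by blast
  then show ?case by simp
qed simp

lemma H_walks:
  assumes g: "graph VH EH" and c: "connected_graph VH EH" and u: "u \<in> VH"
    and t: "a1 \<in> VH" "{a1,a2} \<in> EH" "{a2,a3} \<in> EH" "{a1,a3} \<in> EH"
    and r: "r \<ge> card VH + 3"
  shows "R EH {u} a1 r \<and> R EH {u} a2 r \<and> R EH {u} a3 r"
proof -
  have "\<forall>x\<in>VH. \<forall>y\<in>VH. \<exists>xs. path VH EH xs \<and> hd xs = x \<and> last xs = y"
    using c unfolding connected_graph_def by (rule conjunct2)
  then obtain xs where xs: "path VH EH xs" "hd xs = a1" "last xs = u"
    using t(1) u by meson
  have xw: "wk EH xs" "distinct xs" "set xs \<subseteq> VH" using xs(1) path_iff[of VH EH xs] by simp_all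
  have fin: "finite VH" using g unfolding graph_def by blast
  have "length xs = card (set xs)" using xw(2) by (simp add: distinct_card)
  also have "\<dots> \<le> card VH" using card_mono[OF fin xw(3)] .
  finally have len: "length xs \<le> card VH" .
  have xne: "xs \<noteq> []" using xw wk_nonempty by blast
  define l where "l = length xs - 1"
  have "length xs = Suc l" using xne l_def by simp
  then have R0: "R EH {u} a1 l" unfolding R_def using xw xs by blast
  have "length xs \<ge> 1" using xne by (cases xs) auto
  then have l3: "l + 3 \<le> r - 1" using len l_def r by linarith
  have R1: "R EH {u} a3 (Suc l)" using R_step[OF _ R0, of a3] t(4) by (simp add: insert_commute)
  have R2: "R EH {u} a2 (Suc (Suc l))" using R_step[OF _ R1, of a2] t(3) by simp
  have R3: "R EH {u} a1 (l + 3)" using R_step[OF _ R2, of a1] t(2) by (simp add: numeral_3_eq_3)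
  have all: "R EH {u} a1 m" if "m \<ge> l + 3" for m
  proof (cases "even (m - l)")
    case True
    then obtain k where "m - l = 2 * k" by blast
    then have "m = l + 2 * k" using that by simp
    then show ?thesis using R_pad[OF R0 t(2)] by simp
  next
    case False
    then have "even (m - (l + 3))" using that by (simp add: even_diff_nat)  
    then obtain k where "m - (l + 3) = 2 * k" by blast
    then have "m = (l + 3) + 2 * k" using that by simp
    then show ?thesis using R_pad[OF R3 t(2)] by simp
  qed
  have "R EH {u} a1 r" using all l3 by simp
  moreover have "R EH {u} a1 (r - 1)" using all l3 by simp
  moreover have "r = Suc (r - 1)" using l3 by simp
  ultimately show ?thesis using R_step[of a2 a1 EH "{u}" "r - 1"] R_step[of a3 a1 EH "{u}" "r - 1"] t
    by (simp add: insert_commute)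
qed

definition colr :: "nat \<Rightarrow> 'b \<Rightarrow> 'b \<Rightarrow> 'b \<Rightarrow> nat \<Rightarrow> 'b" where
  "colr n a1 a2 a3 i = (if i = n - 1 \<and> odd n then a3 else if even i then a1 else a2)"

lemma colr_ne:
  assumes "n \<ge> 3" "i < n" "a1 \<noteq> a2" "a2 \<noteq> a3" "a1 \<noteq> a3"
  shows "colr n a1 a2 a3 i \<noteq> colr n a1 a2 a3 (Suc i mod n)"
proof (cases "i = n - 1")
  case True
  then have "Suc i mod n = 0" using assms by simp
  then show ?thesis using True assms unfolding colr_def by auto
next
  case False
  then have "Suc i mod n = Suc i" using assms by simp
  then show ?thesis using False assms unfolding colr_def by auto
qed

lemma colr_in: "colr n a1 a2 a3 i \<in> {a1,a2,a3}"
  unfolding colr_def by auto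




lemma R_dec: "R E S x (Suc m) \<Longrightarrow> \<exists>y. {x,y} \<in> E \<and> R E S y m"
proof -
  assume "R E S x (Suc m)"
  then obtain w where w: "wk E w" "hd w = x" "last w \<in> S" "length w = Suc (Suc m)" unfolding R_def by blast
  then obtain y rest where wz: "w = x # y # rest" by (auto simp: length_Suc_conv)
  have "{x,y} \<in> E" using w(1) wz by simp
  moreover have "wk E (y # rest)" using w(1) wz by simp
  then have "R E S y m" unfolding R_def using w wz by (intro exI[of _ "y # rest"]) auto
  ultimately show ?thesis by blast
qed

lemma R_zero: "R E {u} x 0 \<Longrightarrow> x = u"
  unfolding R_def by (auto simp: length_Suc_conv)

lemma wk_cons_edge: "{x,y} \<in> E \<Longrightarrow> wk E w \<Longrightarrow> hd w = y \<Longrightarrow> wk E (x # w)"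
  using wk_Cons wk_nonempty by metis

primrec Hf :: "('a \<Rightarrow> 'b) \<Rightarrow> (nat \<Rightarrow> 'b \<Rightarrow> 'b) \<Rightarrow> ('a \<Rightarrow> 'a) \<Rightarrow> nat \<Rightarrow> 'a \<Rightarrow> 'b" where
  "Hf b nx p 0 v = b v"
| "Hf b nx p (Suc k) v = nx (Suc k) (Hf b nx p k (p v))"

theorem lemma9:
  fixes VH :: "'b set" and EH :: "'b set set" and u :: 'b
    and VM :: "'a set" and EM :: "'a set set" and C :: "'a set \<times> 'a set set" and r :: nat
  assumes "graph VH EH" and "connected_graph VH EH" and "has_triangle VH EH"
    and "u \<in> VH"
    and "graph VM EM" and "unicyclic_with VM EM C"
    and "r \<ge> card VH + 3"
  shows "\<exists>h. graph_hom VM EM VH EH h \<and>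
           (\<forall>v\<in>VM. dist_to VM EM v (fst C) r \<longrightarrow> h v = u)"
proof -
  note gH = assms(1) and cH = assms(2) and gM = assms(5)
  have uni: "cycles VM EM = {C}" using assms(6) unfolding unicyclic_with_def .
  then have "C \<in> cycles VM EM" by simp
  then obtain cs where C: "C = (set cs, cycle_edges cs)" and ccs: "cycle_list VM EM cs"
    unfolding cycles_def by blast
  have pcs: "wk EM cs" "distinct cs" "set cs \<subseteq> VM"
    using ccs path_iff[of VM EM cs] unfolding cycle_list_def by simp_all
  have n3: "length cs \<ge> 3" using ccs unfolding cycle_list_def by simp
  obtain a1 a2 a3 where tri: "a1 \<in> VH" "a2 \<in> VH" "a3 \<in> VH" "a1 \<noteq> a2" "a2 \<noteq> a3" "a1 \<noteq> a3"
     "{a1,a2} \<in> EH" "{a2,a3} \<in> EH" "{a1,a3} \<in> EH"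
    using assms(3) unfolding has_triangle_def by blast
  have Wa: "R EH {u} a1 r \<and> R EH {u} a2 r \<and> R EH {u} a3 r"
    using H_walks[OF gH cH assms(4) tri(1) tri(7) tri(8) tri(9) assms(7)] .
  have triE: "{x,y} \<in> EH" if "x \<in> {a1,a2,a3}" "y \<in> {a1,a2,a3}" "x \<noteq> y" for x y
    using that tri by (auto simp: insert_commute)
  have triN: "\<exists>y. {x,y} \<in> EH" if "x \<in> {a1,a2,a3}" for x
    using that tri by (auto simp: insert_commute)
  have triR: "R EH {u} x r" if "x \<in> {a1,a2,a3}" for x
    using that Wa by auto

  define n where "n = length cs"
  define col where "col v = colr n a1 a2 a3 (THE i. i < n \<and> cs ! i = v)" for v
  have col_idx: "col (cs ! i) = colr n a1 a2 a3 i" if "i < n" for i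
  proof -
    have "(THE j. j < n \<and> cs ! j = cs ! i) = i"
    proof (rule the_equality)
      show "i < n \<and> cs ! i = cs ! i" using that by simp
    next
      fix j assume "j < n \<and> cs ! j = cs ! i"
      then show "j = i" using that pcs(2) n_def nth_eq_iff_index_eq by metis
    qed
    then show ?thesis unfolding col_def by simp
  qed
  have col_in: "col v \<in> {a1,a2,a3}" if "v \<in> set cs" for v
  proof -
    have "\<exists>i. i < length cs \<and> cs ! i = v" using that by (simp add: in_set_conv_nth)
    then obtain i where i: "i < n" "v = cs ! i" unfolding n_def by blast
    then show ?thesis using col_idx[OF i(1)] colr_in[of n a1 a2 a3 i] by simp
  qed
  have col_edge: "{col x, col y} \<in> EH" if xy: "{x,y} \<in> cycle_edges cs" for x y
  proof -
    obtain i where i: "i < n" "{x,y} = {cs!i, cs!(Suc i mod n)}"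
      using xy unfolding cycle_edges_def n_def by blast
    have i2: "Suc i mod n < n" using i by simp
    have ne: "col (cs!i) \<noteq> col (cs!(Suc i mod n))"
      using col_idx[OF i(1)] col_idx[OF i2] colr_ne[of n i a1 a2 a3] n3 n_def i(1) tri by simp
    have "cs ! i \<in> set cs" "cs ! (Suc i mod n) \<in> set cs" using i(1) i2 n_def by simp_all
    then have "{col (cs!i), col (cs!(Suc i mod n))} \<in> EH" using triE col_in ne by blast
    then show ?thesis using i(2) by (metis doubleton_eq_iff insert_commute)
  qed

  define rC where "rC v = (\<exists>n. R EM (set cs) v n)" for v
  define comp where "comp v = {z. \<exists>w. wk EM w \<and> hd w = v \<and> last w = z}" for v
  define rho where "rho v = (SOME z. z \<in> comp v)" for v
  define T where "T v = (if rC v then set cs else {rho v})" for v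
  define L where "L v = lv EM (T v) v" for v

  have comp_self: "v \<in> comp v" for v unfolding comp_def by (intro CollectI exI[of _ "[v]"]) simp
  have comp_sub: "comp y \<subseteq> comp x" if e: "{x,y} \<in> EM" for x y
  proof
    fix z assume "z \<in> comp y"
    then obtain w where w: "wk EM w" "hd w = y" "last w = z" unfolding comp_def by blast
    have "wk EM (x # w)" using wk_cons_edge[OF e w(1) w(2)] .
    moreover have "last (x # w) = z" using w wk_nonempty[OF w(1)] by simp
    ultimately show "z \<in> comp x" unfolding comp_def by fastforce
  qed
  have T_edge: "T x = T y" if e: "{x,y} \<in> EM" for x y
  proof -
    have e': "{y,x} \<in> EM" using e by (simp add: insert_commute)
    have "rC x \<longleftrightarrow> rC y" unfolding rC_def using R_step[OF e] R_step[OF e'] by blast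
    moreover have "comp x = comp y" using comp_sub[OF e] comp_sub[OF e'] by blast
    ultimately show ?thesis unfolding T_def rho_def by simp
  qed
  have reachT: "\<exists>n. R EM (T v) v n" for v
  proof (cases "rC v")
    case True then show ?thesis unfolding T_def rC_def by simp
  next
    case False
    have "rho v \<in> comp v" unfolding rho_def using comp_self by (rule someI)
    then obtain w where w: "wk EM w" "hd w = v" "last w = rho v" unfolding comp_def by blast
    have "length w = Suc (length w - 1)" using w wk_nonempty by (cases w) auto
    then have "R EM {rho v} v (length w - 1)" unfolding R_def using w by blast
    then show ?thesis unfolding T_def using False by auto
  qed
  have arcsT: "\<exists>w. wk EM w \<and> hd w = a \<and> last w = b \<and> ed w \<subseteq> snd C"
    if "a \<in> T v" "b \<in> T v" for a b v
  proof (cases "rC v")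
    case True
    then have "a \<in> set cs" "b \<in> set cs" using that unfolding T_def by auto
    then obtain w where "wk EM w" "hd w = a" "last w = b" "ed w \<subseteq> ed cs" using arc[OF pcs(1)] by blast
    then show ?thesis using ed_cyc[of cs] C by auto
  next
    case False
    then have "a = rho v" "b = rho v" using that unfolding T_def by auto
    then show ?thesis by (intro exI[of _ "[a]"]) simp
  qed
  have inS: "rC x \<and> T x = set cs \<and> L x = 0" if "x \<in> set cs" for x
  proof -
    have R0: "R EM (set cs) x 0" unfolding R_def using that by (intro exI[of _ "[x]"]) simp
    then have "rC x" unfolding rC_def by blast
    moreover have "lv EM (set cs) x = 0" using lv_zero[OF R0] that by simp
    ultimately show ?thesis unfolding L_def T_def by simp
  qed

  define p where "p v = (SOME z. {v,z} \<in> EM \<and> Suc (L z) = L v)" for v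
  have p_ok: "{v, p v} \<in> EM \<and> L (p v) = k" if Lvk: "L v = Suc k" for v k
  proof -
    obtain m where m: "R EM (T v) v m" using reachT by blast
    obtain z where z: "{v,z} \<in> EM" "lv EM (T v) z = k"
      using parent_ex[OF m] Lvk unfolding L_def by blast
    have "L z = k" using z T_edge[OF z(1)] unfolding L_def by simp
    then have "\<exists>z. {v,z} \<in> EM \<and> Suc (L z) = L v" using z that by auto
    then have "{v, p v} \<in> EM \<and> Suc (L (p v)) = L v" unfolding p_def by (rule someI_ex)
    then show ?thesis using that by simp
  qed

  define nxt where "nxt k x = (if k \<le> r then (SOME y. {x,y} \<in> EH \<and> R EH {u} y (r - k))
      else (SOME y. {x,y} \<in> EH))" for k x
  define b where "b v = (if rC v then col v else a1)" for v
  define h where "h v = Hf b nxt p (L v) v" for v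

  have Inv: "\<forall>v. L v = k \<longrightarrow> (\<exists>y. {Hf b nxt p k v, y} \<in> EH) \<and>
      (k \<le> r \<longrightarrow> R EH {u} (Hf b nxt p k v) (r - k)) \<and>
      (\<forall>j. k = Suc j \<longrightarrow> {Hf b nxt p j (p v), Hf b nxt p k v} \<in> EH)" for k
  proof (induction k)
    case 0
    show ?case
    proof (intro allI impI)
      fix v assume L0: "L v = 0"
      obtain m where m: "R EM (T v) v m" using reachT by blast
      have vT: "v \<in> T v" using lv_zero[OF m] L0 unfolding L_def by simp
      have "b v \<in> {a1,a2,a3}"
      proof (cases "rC v")
        case True then show ?thesis using vT col_in unfolding b_def T_def by simp
      next
        case False then show ?thesis unfolding b_def by simp
      qed
      then show "(\<exists>y. {Hf b nxt p 0 v, y} \<in> EH) \<and> (0 \<le> r \<longrightarrow> R EH {u} (Hf b nxt p 0 v) (r - 0)) \<and>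
        (\<forall>j. 0 = Suc j \<longrightarrow> {Hf b nxt p j (p v), Hf b nxt p 0 v} \<in> EH)"
        using triN triR by simp
    qed
  next
    case (Suc j)
    show ?case
    proof (intro allI impI)
      fix v assume Lv: "L v = Suc j"
      have pv: "{v, p v} \<in> EM" "L (p v) = j" using p_ok[OF Lv] by auto
      define X where "X = Hf b nxt p j (p v)"
      have IH: "(\<exists>y. {X, y} \<in> EH) \<and> (j \<le> r \<longrightarrow> R EH {u} X (r - j))"
        using Suc.IH pv(2) unfolding X_def by blast
      have HS: "Hf b nxt p (Suc j) v = nxt (Suc j) X" unfolding X_def by simp
      have main: "{X, nxt (Suc j) X} \<in> EH \<and> (Suc j \<le> r \<longrightarrow> R EH {u} (nxt (Suc j) X) (r - Suc j))"
      proof (cases "Suc j \<le> r")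
        case True
        then have "R EH {u} X (Suc (r - Suc j))" using IH by (simp add: Suc_diff_Suc)
        then have "\<exists>y. {X,y} \<in> EH \<and> R EH {u} y (r - Suc j)" by (rule R_dec)
        then have "{X, SOME y. {X,y} \<in> EH \<and> R EH {u} y (r - Suc j)} \<in> EH \<and>
           R EH {u} (SOME y. {X,y} \<in> EH \<and> R EH {u} y (r - Suc j)) (r - Suc j)" by (rule someI_ex)
        then show ?thesis unfolding nxt_def using True by simp
      next
        case False
        have "\<exists>y. {X,y} \<in> EH" using IH by blast
        then have "{X, SOME y. {X,y} \<in> EH} \<in> EH" by (rule someI_ex)
        then show ?thesis unfolding nxt_def using False by simp
      qed
      have nb: "\<exists>y. {nxt (Suc j) X, y} \<in> EH" using main by (metis insert_commute)
      show "(\<exists>y. {Hf b nxt p (Suc j) v, y} \<in> EH) \<and>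
         (Suc j \<le> r \<longrightarrow> R EH {u} (Hf b nxt p (Suc j) v) (r - Suc j)) \<and>
         (\<forall>i. Suc j = Suc i \<longrightarrow> {Hf b nxt p i (p v), Hf b nxt p (Suc j) v} \<in> EH)"
        using HS main nb unfolding X_def by simp
    qed
  qed

  have hV: "h x \<in> VH" for x
  proof -
    obtain y where "{h x, y} \<in> EH" using Inv[of "L x"] unfolding h_def by blast
    then show ?thesis using graph_edge[OF gH] by blast
  qed

  have claim1: "{h x, h y} \<in> EH" if e: "{x,y} \<in> EM" and Lxy: "L x = Suc (L y)" for x y
  proof -
    define S where "S = T x"
    have Sy: "T y = S" using T_edge[OF e] S_def by simp
    have xV: "x \<in> VM" using graph_edge[OF gM e] by blast
    have pe: "{x, p x} \<in> EM" "L (p x) = L y" using p_ok[OF Lxy] by auto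
    have "p x = y"
    proof (rule ccontr)
      assume pne: "p x \<noteq> y"
      define q where "q = p x"
      have Tq: "T q = S" using T_edge[OF pe(1)] S_def q_def by simp
      obtain mq where mq: "R EM S q mq" using reachT[of q] Tq by auto
      obtain P where P: "wk EM P" "hd P = q" "last P \<in> S" "length P = Suc (lv EM S q)"
        using shortest_get[OF mq] by blast
      have lq: "lv EM S q = L y" using pe(2) Tq unfolding L_def q_def by simp
      have lx: "lv EM S x = Suc (L y)" using Lxy unfolding L_def S_def by simp
      have ly: "lv EM S y = L y" using Sy unfolding L_def by simp
      have Pne: "P \<noteq> []" using P wk_nonempty by blast
      have xP: "x \<notin> set P"
      proof
        assume "x \<in> set P"
        then have "lv EM S x \<le> lv EM S q" using shortest_set(1)[OF P] by blast
        then show False using lq lx by simp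
      qed
      have A: "wk EM (x # P)" "hd (x # P) = x" "last (x # P) \<in> S"
        using wk_cons_edge[OF _ P(1) P(2), of x] pe(1) P(3) Pne unfolding q_def by auto
      have nA: "{x,y} \<notin> ed (x # P)"
        using notin_ed[of "x # P" x y] xP Pne P(2) pne unfolding q_def by simp
      obtain my where my: "R EM S y my" using reachT[of y] Sy by auto
      obtain B where B: "wk EM B" "hd B = y" "last B \<in> S" "length B = Suc (lv EM S y)"
        using shortest_get[OF my] by blast
      have xB: "x \<notin> set B"
      proof
        assume "x \<in> set B"
        then have "lv EM S x \<le> lv EM S y" using shortest_set(1)[OF B] by blast
        then show False using ly lx by simp
      qed
      have nB: "{x,y} \<notin> ed B" using ed_sub xB by blast
      have arcs: "\<exists>w. wk EM w \<and> hd w = a \<and> last w = c \<and> ed w \<subseteq> snd C" if "a \<in> S" "c \<in> S" for a c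
        using arcsT[of a x c] that S_def by simp
      have "{x,y} \<in> snd C" using key[OF gM uni e xV A B(1-3) arcs nA nB] .
      then have "x \<in> set cs" using cyc_edge_mem C by fastforce
      then show False using inS Lxy by simp
    qed
    then have "{Hf b nxt p (L y) y, Hf b nxt p (Suc (L y)) x} \<in> EH"
      using Inv[of "Suc (L y)"] Lxy by blast
    then show ?thesis unfolding h_def using Lxy by (simp add: insert_commute)
  qed

  have claim2: "{h x, h y} \<in> EH" if e: "{x,y} \<in> EM" and Lxy: "L x = L y" for x y
  proof -
    define S where "S = T x"
    have Sy: "T y = S" using T_edge[OF e] S_def by simp
    have xV: "x \<in> VM" using graph_edge[OF gM e] by blast
    have lxy: "lv EM S x = lv EM S y" using Lxy Sy unfolding L_def S_def by simp
    obtain mx where mx: "R EM S x mx" using reachT[of x] S_def by auto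
    obtain A where A: "wk EM A" "hd A = x" "last A \<in> S" "length A = Suc (lv EM S x)"
      using shortest_get[OF mx] by blast
    obtain my where my: "R EM S y my" using reachT[of y] Sy by auto
    obtain B where B: "wk EM B" "hd B = y" "last B \<in> S" "length B = Suc (lv EM S y)"
      using shortest_get[OF my] by blast
    have nA: "{x,y} \<notin> ed A"
    proof (rule notin_ed[OF A(2)])
      show "x \<notin> set (tl A)" using shortest_set(2)[OF A] by blast
      show "tl A = [] \<or> hd (tl A) \<noteq> y"
      proof (cases "tl A = []")
        case False
        then have "hd (tl A) \<in> set (tl A)" by simp
        then have "lv EM S (hd (tl A)) < lv EM S x" using shortest_set(2)[OF A] by blast
        then show ?thesis using lxy by auto
      qed simp
    qed
    have nB': "{y,x} \<notin> ed B"
    proof (rule notin_ed[OF B(2)])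
      show "y \<notin> set (tl B)" using shortest_set(2)[OF B] by blast
      show "tl B = [] \<or> hd (tl B) \<noteq> x"
      proof (cases "tl B = []")
        case False
        then have "hd (tl B) \<in> set (tl B)" by simp
        then have "lv EM S (hd (tl B)) < lv EM S y" using shortest_set(2)[OF B] by blast
        then show ?thesis using lxy by auto
      qed simp
    qed
    then have nB: "{x,y} \<notin> ed B" by (simp add: insert_commute)
    have arcs: "\<exists>w. wk EM w \<and> hd w = a \<and> last w = c \<and> ed w \<subseteq> snd C" if "a \<in> S" "c \<in> S" for a c
      using arcsT[of a x c] that S_def by simp
    have ce: "{x,y} \<in> cycle_edges cs" using key[OF gM uni e xV A(1-3) B(1-3) arcs nA nB] C by simp
    then have "x \<in> set cs" "y \<in> set cs" using cyc_edge_mem by fastforce+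
    then have "h x = col x" "h y = col y" using inS unfolding h_def b_def by auto
    then show ?thesis using col_edge[OF ce] by simp
  qed

  have hom: "graph_hom VM EM VH EH h"
    unfolding graph_hom_def
  proof (intro conjI allI impI ballI)
    fix x assume "x \<in> VM" then show "h x \<in> VH" using hV by blast
  next
    fix x y assume e: "{x,y} \<in> EM"
    have e': "{y,x} \<in> EM" using e by (simp add: insert_commute)
    obtain mx where mx: "R EM (T x) x mx" using reachT by blast
    obtain my where my: "R EM (T y) y my" using reachT by blast
    have "lv EM (T x) x \<le> Suc (lv EM (T x) y)" using lv_step[OF e] my T_edge[OF e] by simp
    moreover have "lv EM (T y) y \<le> Suc (lv EM (T y) x)" using lv_step[OF e'] mx T_edge[OF e] by simp
    ultimately have "L x \<le> Suc (L y)" "L y \<le> Suc (L x)" unfolding L_def using T_edge[OF e] by simp_all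
    then have "L x = Suc (L y) \<or> L x = L y \<or> L y = Suc (L x)" by linarith
    then show "{h x, h y} \<in> EH"
    proof (elim disjE)
      assume "L x = Suc (L y)" then show ?thesis using claim1[OF e] by blast
    next
      assume "L x = L y" then show ?thesis using claim2[OF e] by blast
    next
      assume "L y = Suc (L x)" then show ?thesis using claim1[OF e'] by (simp add: insert_commute)
    qed
  qed

  have dist: "h v = u" if vV: "v \<in> VM" and d: "dist_to VM EM v (fst C) r" for v
  proof -
    have fC: "fst C = set cs" using C by simp
    obtain xs where xs: "path VM EM xs" "hd xs = v" "last xs \<in> set cs" "length xs = Suc r"
      using d fC unfolding dist_to_def by auto
    have nopath: "\<not> (\<exists>xs. path VM EM xs \<and> hd xs = v \<and> last xs \<in> set cs \<and> length xs = Suc m)" if "m < r" for m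
      using d fC that unfolding dist_to_def by auto
    have Rr: "R EM (set cs) v r" unfolding R_def using xs path_iff[of VM EM xs] by auto
    then have rv: "rC v" unfolding rC_def by blast
    then have Tv: "T v = set cs" unfolding T_def by simp
    have Lle: "L v \<le> r" using lv_ex[OF Rr] Tv unfolding L_def by simp
    have "\<not> L v < r"
    proof
      assume lt: "L v < r"
      obtain w where w: "wk EM w" "hd w = v" "last w \<in> set cs" "length w = Suc (lv EM (set cs) v)"
        using shortest_get[OF Rr] by blast
      obtain q where q: "wk EM q" "distinct q" "hd q = hd w" "last q = last w" "set q \<subseteq> set w"
          "length q \<le> length w"
        using shortcut[OF w(1)] by blast
      have "set w \<subseteq> VM" using wk_set[OF gM w(1)] w(2) vV by simp
      then have pq: "path VM EM q" using q path_iff[of VM EM q] by auto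
      have qne: "q \<noteq> []" using q wk_nonempty by blast
      have lq: "length q = Suc (length q - 1)" using qne by (cases q) auto
      have lr: "length q - 1 < r" using q(6) w(4) lt Tv unfolding L_def by simp
      have "path VM EM q \<and> hd q = v \<and> last q \<in> set cs \<and> length q = Suc (length q - 1)"
        using pq q(3) q(4) w(2) w(3) lq by simp
      then show False using nopath[OF lr] by blast
    qed
    then have "L v = r" using Lle by simp
    then have "R EH {u} (h v) 0" using Inv[of r] unfolding h_def by simp
    then show ?thesis by (rule R_zero)
  qed

  show ?thesis using hom dist by blast
qed


end
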